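(* Let $Z$ be a metric space and let $X, Y \subseteq Z$ be compact subsets. Regard $\mathcal{H}(X)$ and $\mathcal{H}(Y)$ as subsets of the metric space $\mathcal{H}(Z)$ (with the Hausdorff distance). Then $$\bigl|\mathcal{H}(X)\,\mathcal{H}(Y)\bigr|_{\mathcal{H}(Z)} = |XY|_Z,$$ i.e. the Hausdorff distance in $\mathcal{H}(Z)$ between $\mathcal{H}(X)$ and $\mathcal{H}(Y)$ equals the Hausdorff distance in $Z$ between $X$ and $Y$.
   Context: For a metric space $Z$, $|xy|$ denotes the distance between points; for nonempty $B \subseteq Z$ and $x \in Z$, $|xB| = \inf\{|xb| : b \in B\}$. For nonempty subsets $P,Q$ of a metric space $W$, the Hausdorff distance is $|PQ|_W = \max\{\sup_{p\in P}|pQ|, \sup_{q\in Q}|qP|\}$. For a metric space $W$, $\mathcal{H}(W)$ (the Hausdorff hyperspace) is the family of all nonempty bounded closed subsets of $W$ endowed with the Hausdorff distance; for compact $X\subseteq Z$, $\mathcal{H}(X)\subseteq\mathcal{H}(Z)$. *)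

theory Defs
  imports "HOL-Analysis.Analysis"
begin

text \<open>Hausdorff distance between nonempty subsets P, Q of a space with distance function d:
  max of sup over p in P of inf over q in Q of d p q, and symmetrically.
  (Meaningful for nonempty sets with bounded values, as in the paper.)\<close>
definition gen_hausdist :: "('b \<Rightarrow> 'b \<Rightarrow> real) \<Rightarrow> 'b set \<Rightarrow> 'b set \<Rightarrow> real" where
  "gen_hausdist d P Q =
     max (SUP p\<in>P. INF q\<in>Q. d p q) (SUP q\<in>Q. INF p\<in>P. d q p)"

definition hausdist_Z :: "'a::metric_space set \<Rightarrow> 'a set \<Rightarrow> real" where
  "hausdist_Z = gen_hausdist dist"

definition hyperspace :: "'a::metric_space set \<Rightarrow> 'a set set" where
  "hyperspace W = {A. A \<noteq> {} \<and> A \<subseteq> W \<and> bounded A \<and> closedin (top_of_set W) A}"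

end

theory Submission
  imports Defs
begin

lemma infdist_attain_cpt:
  fixes A :: "'a::metric_space set"
  assumes "compact A" "A \<noteq> {}"
  shows "\<exists>a\<in>A. infdist x A = dist x a"
proof -
  have "continuous_on A (dist x)" by (intro continuous_intros)
  from continuous_attains_inf[OF assms this] obtain a where a: "a \<in> A" "\<And>y. y \<in> A \<Longrightarrow> dist x a \<le> dist x y"
    by blast
  have "infdist x A \<ge> dist x a" unfolding infdist_def using assms a by (auto intro: cINF_greatest)
  with infdist_le[OF a(1), of x] have "infdist x A = dist x a" by linarith
  with a(1) show ?thesis by blast
qed

lemma bdd_infdist:
  fixes P Q :: "'a::metric_space set"
  assumes "compact P"
  shows "bdd_above ((\<lambda>p. infdist p Q) ` P)"
proof -
  have "continuous_on P (\<lambda>p. infdist p Q)" by (intro continuous_intros)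
  then have "compact ((\<lambda>p. infdist p Q) ` P)" using assms compact_continuous_image by blast
  then show ?thesis by (intro bounded_imp_bdd_above compact_imp_bounded)
qed

lemma hd_eq:
  fixes P Q :: "'a::metric_space set"
  assumes "P \<noteq> {}" "Q \<noteq> {}"
  shows "hausdist_Z P Q = max (SUP p\<in>P. infdist p Q) (SUP q\<in>Q. infdist q P)"
  unfolding hausdist_Z_def gen_hausdist_def infdist_def
  using assms by (simp add: dist_commute)

lemma hd_le:
  fixes P Q :: "'a::metric_space set"
  assumes "P \<noteq> {}" "Q \<noteq> {}" "\<And>p. p \<in> P \<Longrightarrow> infdist p Q \<le> e" "\<And>q. q \<in> Q \<Longrightarrow> infdist q P \<le> e"
  shows "hausdist_Z P Q \<le> e"
  unfolding hd_eq[OF assms(1,2)] by (intro max.boundedI cSUP_least) (use assms in auto)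

lemma hd_ge:
  fixes P Q :: "'a::metric_space set"
  assumes "compact P" "p \<in> P" "Q \<noteq> {}"
  shows "infdist p Q \<le> hausdist_Z P Q"
proof -
  have "P \<noteq> {}" using assms(2) by blast
  then show ?thesis using hd_eq[OF _ assms(3), of P] cSUP_upper[OF assms(2) bdd_infdist[OF assms(1), of Q]] by linarith
qed

lemma hd_nonneg:
  fixes P Q :: "'a::metric_space set"
  assumes "compact P" "P \<noteq> {}" "Q \<noteq> {}"
  shows "0 \<le> hausdist_Z P Q"
proof -
  obtain p where p: "p \<in> P" using assms(2) by blast
  show ?thesis using hd_ge[OF assms(1) p assms(3)] infdist_nonneg[of p Q] by linarith
qed

lemma hyper_compact:
  assumes "compact X" "A \<in> hyperspace X"
  shows "compact A" "A \<noteq> {}" "A \<subseteq> X"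
proof -
  from assms(2) have "closedin (top_of_set X) A" "A \<noteq> {}" "A \<subseteq> X" unfolding hyperspace_def by auto
  then obtain T where "closed T" "A = X \<inter> T" by (auto simp: closedin_closed)
  then show "compact A" using assms(1) compact_Int_closed by blast
  show "A \<noteq> {}" "A \<subseteq> X" by fact+
qed

lemma X_hyper:
  assumes "compact X" "X \<noteq> {}"
  shows "X \<in> hyperspace X"
  using assms unfolding hyperspace_def by (auto simp: compact_imp_bounded)

lemma inf_bdd:
  fixes X Y :: "'a::metric_space set"
  assumes "compact X" "compact Y" "A \<in> hyperspace X"
  shows "bdd_below ((\<lambda>B. hausdist_Z A B) ` hyperspace Y)"
  using hd_nonneg[OF hyper_compact(1,2)[OF assms(1,3)]] hyper_compact(2)[OF assms(2)] by (intro bdd_belowI2[where m=0]) auto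

lemma half_upper:
  fixes X Y :: "'a::metric_space set"
  assumes "compact X" "compact Y" "X \<noteq> {}" "Y \<noteq> {}" "A \<in> hyperspace X"
  shows "(INF B\<in>hyperspace Y. hausdist_Z A B) \<le> hausdist_Z X Y"
proof -
  let ?d = "hausdist_Z X Y"
  have A: "compact A" "A \<noteq> {}" "A \<subseteq> X" using hyper_compact[OF assms(1,5)] by auto
  define B where "B = {y\<in>Y. infdist y A \<le> ?d}"
  have near: "\<exists>y\<in>B. dist a y \<le> ?d" if "a \<in> A" for a
  proof -
    obtain y where y: "y \<in> Y" "infdist a Y = dist a y" using infdist_attain_cpt[OF assms(2,4)] by blast
    have "infdist a Y \<le> ?d" using hd_ge[OF assms(1) _ assms(4)] that A(3) by blast
    then have "dist a y \<le> ?d" using y by simp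
    moreover have "infdist y A \<le> ?d" using infdist_le2[OF that, of y] calculation by (simp add: dist_commute)
    ultimately show ?thesis using y unfolding B_def by blast
  qed
  have "closed {y. infdist y A \<le> ?d}"
    by (intro closed_Collect_le continuous_intros)
  then have "closedin (top_of_set Y) B" unfolding B_def closedin_closed by (intro exI[of _ "{y. infdist y A \<le> ?d}"]) auto
  moreover have "B \<noteq> {}" using near A(2) by blast
  moreover have "bounded B" using compact_imp_bounded[OF assms(2)] unfolding B_def
    by (rule bounded_subset) auto
  ultimately have Bh: "B \<in> hyperspace Y" unfolding hyperspace_def B_def by auto
  have "hausdist_Z A B \<le> ?d"
  proof (rule hd_le)
    show "A \<noteq> {}" "B \<noteq> {}" by fact+
    show "infdist p B \<le> ?d" if "p \<in> A" for p using near[OF that] infdist_le2 by blast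
    show "infdist q A \<le> ?d" if "q \<in> B" for q using that unfolding B_def by auto
  qed
  then show ?thesis using cINF_lower[OF inf_bdd[OF assms(1,2,5)] Bh] by linarith
qed

lemma half_lower:
  fixes X Y :: "'a::metric_space set"
  assumes "compact X" "compact Y" "X \<noteq> {}" "Y \<noteq> {}"
  shows "(SUP x\<in>X. infdist x Y) \<le> (SUP A\<in>hyperspace X. INF B\<in>hyperspace Y. hausdist_Z A B)"
proof -
  have Xh: "X \<in> hyperspace X" using X_hyper assms by blast
  have Yh: "Y \<in> hyperspace Y" using X_hyper assms by blast
  have "(SUP x\<in>X. infdist x Y) \<le> (INF B\<in>hyperspace Y. hausdist_Z X B)"
  proof (rule cINF_greatest)
    show "hyperspace Y \<noteq> {}" using Yh by blast
    fix B assume "B \<in> hyperspace Y"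
    note Bc = hyper_compact[OF assms(2) this]
    show "(SUP x\<in>X. infdist x Y) \<le> hausdist_Z X B"
    proof (rule cSUP_least)
      show "X \<noteq> {}" by fact
      fix x assume x: "x \<in> X"
      obtain b where b: "b \<in> B" "infdist x B = dist x b" using infdist_attain_cpt[OF Bc(1,2)] by blast
      have "infdist x Y \<le> infdist x B" using infdist_le[of b Y x] b Bc(3) by auto
      also have "\<dots> \<le> hausdist_Z X B" using hd_ge[OF assms(1) x Bc(2)] .
      finally show "infdist x Y \<le> hausdist_Z X B" .
    qed
  qed
  also have "\<dots> \<le> (SUP A\<in>hyperspace X. INF B\<in>hyperspace Y. hausdist_Z A B)"
  proof (rule cSUP_upper[OF Xh])
    show "bdd_above ((\<lambda>A. INF B\<in>hyperspace Y. hausdist_Z A B) ` hyperspace X)"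
      by (intro bdd_aboveI2[where M="hausdist_Z X Y"]) (rule half_upper[OF assms])
  qed
  finally show ?thesis .
qed

lemma half_sup:
  fixes X Y :: "'a::metric_space set"
  assumes "compact X" "compact Y" "X \<noteq> {}" "Y \<noteq> {}"
  shows "(SUP A\<in>hyperspace X. INF B\<in>hyperspace Y. hausdist_Z A B) \<le> hausdist_Z X Y"
  apply (rule cSUP_least)
  using X_hyper[OF assms(1,3)] apply blast
  by (rule half_upper[OF assms])

theorem mainTheorem6:
  fixes X Y :: "'a::metric_space set"
  assumes "compact X" "compact Y" "X \<noteq> {}" "Y \<noteq> {}"
  shows "gen_hausdist hausdist_Z (hyperspace X) (hyperspace Y) = hausdist_Z X Y"
proof -
  have sym: "hausdist_Z Y X = hausdist_Z X Y" unfolding hd_eq[OF assms(3,4)] hd_eq[OF assms(4,3)] by simp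
  have 1: "(SUP A\<in>hyperspace X. INF B\<in>hyperspace Y. hausdist_Z A B) \<le> hausdist_Z X Y"
    using half_sup[OF assms] .
  have 2: "(SUP A\<in>hyperspace Y. INF B\<in>hyperspace X. hausdist_Z A B) \<le> hausdist_Z X Y"
    using half_sup[OF assms(2,1,4,3)] sym by simp
  have 3: "(SUP x\<in>X. infdist x Y) \<le> (SUP A\<in>hyperspace X. INF B\<in>hyperspace Y. hausdist_Z A B)"
    using half_lower[OF assms] .
  have 4: "(SUP x\<in>Y. infdist x X) \<le> (SUP A\<in>hyperspace Y. INF B\<in>hyperspace X. hausdist_Z A B)"
    using half_lower[OF assms(2,1,4,3)] .
  show ?thesis unfolding gen_hausdist_def using 1 2 3 4 hd_eq[OF assms(3,4)] by linarith
qed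

end
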